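(* Let $K\subseteq L\subseteq \mathfrak U\subseteq\mathcal A$ be differential fields of characteristic $0$, where $\mathcal A$ is a saturated differentially closed field with $|\mathfrak U|<|\mathcal A|$, and suppose $L/K$ is a strongly normal extension. Then there is an embedding of the group $gal(L/K)$ into the group $Gal(L/K)$. Moreover, every $\sigma\in Hom_K(L,\mathfrak U)$ extends uniquely to an element of $Gal(L/K)$, and this extension restricts to an element of $Gal_{\mathfrak U}(L/K)$.
   Context: For a differential field $F$, $C_F$ is its field of constants. $\langle A,B\rangle$ denotes the differential field generated by $A\cup B$ inside $\mathcal A$. $Hom_K(L,M)$ is the set of differential field embeddings of $L$ into $M$ that fix $K$ pointwise. An element $\tau\in Hom_K(L,\mathcal A)$ is strong if $\tau$ is the identity on $C_L$ and $\langle L,C_{\mathcal A}\rangle=\langle\tau(L),C_{\mathcal A}\rangle$. $L/K$ is strongly normal if $L$ is finitely generated as a differential field over $K$ and every $\tau\in Hom_K(L,\mathcal A)$ is strong. $gal(L/K)$ is the group of differential field automorphisms of $L$ fixing $K$; $Gal(L/K)$ is the group of differential field automorphisms of $\langle L,C_{\mathcal A}\rangle$ fixing $\langle K,C_{\mathcal A}\rangle$ pointwise; $Gal_{\mathfrak U}(L/K)$ is the group of differential field automorphisms of $\langle L,C_{\mathfrak U}\rangle$ fixing $\langle K,C_{\mathfrak U}\rangle$ pointwise. *)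

theory Defs
  imports "HOL-Library.Poly_Mapping" "HOL-Library.FuncSet"
begin

text \<open>The ambient field A is the type 'a (of characteristic 0) with derivation D;
  differential subfields are subsets of it.\<close>

definition derivation :: "('a::field \<Rightarrow> 'a) \<Rightarrow> bool" where
  "derivation D \<longleftrightarrow> (\<forall>x y. D (x + y) = D x + D y) \<and> (\<forall>x y. D (x * y) = D x * y + x * D y)"

definition dsubfield :: "('a::field \<Rightarrow> 'a) \<Rightarrow> 'a set \<Rightarrow> bool" where
  "dsubfield D F \<longleftrightarrow> 0 \<in> F \<and> 1 \<in> F \<and>
     (\<forall>x\<in>F. \<forall>y\<in>F. x + y \<in> F \<and> x * y \<in> F) \<and>
     (\<forall>x\<in>F. - x \<in> F \<and> inverse x \<in> F \<and> D x \<in> F)"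

definition dgen :: "('a::field \<Rightarrow> 'a) \<Rightarrow> 'a set \<Rightarrow> 'a set" where
  "dgen D S = \<Inter> {F. dsubfield D F \<and> S \<subseteq> F}"

definition consts_of :: "('a::field \<Rightarrow> 'a) \<Rightarrow> 'a set \<Rightarrow> 'a set" where
  "consts_of D F = {x \<in> F. D x = 0}"

definition dHom :: "('a::field \<Rightarrow> 'a) \<Rightarrow> 'a set \<Rightarrow> 'a set \<Rightarrow> 'a set \<Rightarrow> ('a \<Rightarrow> 'a) set" where
  "dHom D K L M = {\<tau>. \<tau> \<in> extensional L \<and> inj_on \<tau> L \<and> \<tau> ` L \<subseteq> M \<and> \<tau> 1 = 1 \<and>
     (\<forall>x\<in>L. \<forall>y\<in>L. \<tau> (x + y) = \<tau> x + \<tau> y \<and> \<tau> (x * y) = \<tau> x * \<tau> y) \<and>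
     (\<forall>x\<in>L. \<tau> (D x) = D (\<tau> x)) \<and> (\<forall>x\<in>K. \<tau> x = x)}"

definition strong :: "('a::field \<Rightarrow> 'a) \<Rightarrow> 'a set \<Rightarrow> ('a \<Rightarrow> 'a) \<Rightarrow> bool" where
  "strong D L \<tau> \<longleftrightarrow> (\<forall>x\<in>consts_of D L. \<tau> x = x) \<and>
     dgen D (L \<union> consts_of D UNIV) = dgen D (\<tau> ` L \<union> consts_of D UNIV)"

definition strongly_normal :: "('a::field \<Rightarrow> 'a) \<Rightarrow> 'a set \<Rightarrow> 'a set \<Rightarrow> bool" where
  "strongly_normal D K L \<longleftrightarrow> dsubfield D K \<and> dsubfield D L \<and> K \<subseteq> L \<and>
     (\<exists>S. finite S \<and> L = dgen D (K \<union> S)) \<and>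
     (\<forall>\<tau>\<in>dHom D K L UNIV. strong D L \<tau>)"

definition daut :: "('a::field \<Rightarrow> 'a) \<Rightarrow> 'a set \<Rightarrow> 'a set \<Rightarrow> ('a \<Rightarrow> 'a) set" where
  "daut D K M = {\<sigma> \<in> dHom D K M M. \<sigma> ` M = M}"

definition gal_small :: "('a::field \<Rightarrow> 'a) \<Rightarrow> 'a set \<Rightarrow> 'a set \<Rightarrow> ('a \<Rightarrow> 'a) set" where
  "gal_small D K L = daut D K L"

definition Gal :: "('a::field \<Rightarrow> 'a) \<Rightarrow> 'a set \<Rightarrow> 'a set \<Rightarrow> ('a \<Rightarrow> 'a) set" where
  "Gal D K L = daut D (dgen D (K \<union> consts_of D UNIV)) (dgen D (L \<union> consts_of D UNIV))"

definition Gal_in :: "('a::field \<Rightarrow> 'a) \<Rightarrow> 'a set \<Rightarrow> 'a set \<Rightarrow> 'a set \<Rightarrow> ('a \<Rightarrow> 'a) set" where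
  "Gal_in D U K L = daut D (dgen D (K \<union> consts_of D U)) (dgen D (L \<union> consts_of D U))"

definition group_embedding ::
  "'a set \<Rightarrow> ('a \<Rightarrow> 'a) set \<Rightarrow> 'a set \<Rightarrow> ('a \<Rightarrow> 'a) set \<Rightarrow> (('a \<Rightarrow> 'a) \<Rightarrow> ('a \<Rightarrow> 'a)) \<Rightarrow> bool" where
  "group_embedding M1 G1 M2 G2 \<Phi> \<longleftrightarrow> \<Phi> ` G1 \<subseteq> G2 \<and> inj_on \<Phi> G1 \<and>
     (\<forall>\<sigma>\<in>G1. \<forall>\<tau>\<in>G1. \<Phi> (compose M1 \<sigma> \<tau>) = compose M2 (\<Phi> \<sigma>) (\<Phi> \<tau>))"

section \<open>Differential closedness (Blum axioms)\<close>

text \<open>Differential polynomials in one variable x over A: monomials in x, x', x'', ...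
  are finitely supported maps nat => nat (exponent of the k-th derivative).\<close>
definition dpeval :: "('a::field \<Rightarrow> 'a) \<Rightarrow> ((nat \<Rightarrow>\<^sub>0 nat) \<Rightarrow>\<^sub>0 'a) \<Rightarrow> 'a \<Rightarrow> 'a" where
  "dpeval D P a = (\<Sum>m\<in>Poly_Mapping.keys P. Poly_Mapping.lookup P m * (\<Prod>k\<in>Poly_Mapping.keys (m::nat \<Rightarrow>\<^sub>0 nat). ((D ^^ k) a) ^ Poly_Mapping.lookup m k))"

definition diff_closed :: "('a::field \<Rightarrow> 'a) \<Rightarrow> bool" where
  "diff_closed D \<longleftrightarrow> (\<forall>(f::(nat \<Rightarrow>\<^sub>0 nat) \<Rightarrow>\<^sub>0 'a) (g::(nat \<Rightarrow>\<^sub>0 nat) \<Rightarrow>\<^sub>0 'a) (n::nat).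
     (\<exists>m\<in>Poly_Mapping.keys f. Poly_Mapping.lookup m n \<noteq> 0) \<and> (\<forall>m\<in>Poly_Mapping.keys f. \<forall>k\<in>Poly_Mapping.keys m. k \<le> n) \<and>
     g \<noteq> 0 \<and> (\<forall>m\<in>Poly_Mapping.keys g. \<forall>k\<in>Poly_Mapping.keys m. k < n)
     \<longrightarrow> (\<exists>a. dpeval D f a = 0 \<and> dpeval D g a \<noteq> 0))"

datatype 'a dterm = DVar nat | DPar 'a | DZero | DOne | DAdd "'a dterm" "'a dterm"
  | DNeg "'a dterm" | DMul "'a dterm" "'a dterm" | DDer "'a dterm"

datatype 'a dform = FEq "'a dterm" "'a dterm" | FNot "'a dform" | FAnd "'a dform" "'a dform"
  | FEx nat "'a dform"

fun tval :: "('a::field \<Rightarrow> 'a) \<Rightarrow> (nat \<Rightarrow> 'a) \<Rightarrow> 'a dterm \<Rightarrow> 'a" where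
  "tval D e (DVar n) = e n"
| "tval D e (DPar a) = a"
| "tval D e DZero = 0"
| "tval D e DOne = 1"
| "tval D e (DAdd s t) = tval D e s + tval D e t"
| "tval D e (DNeg t) = - tval D e t"
| "tval D e (DMul s t) = tval D e s * tval D e t"
| "tval D e (DDer t) = D (tval D e t)"

fun fsat :: "('a::field \<Rightarrow> 'a) \<Rightarrow> (nat \<Rightarrow> 'a) \<Rightarrow> 'a dform \<Rightarrow> bool" where
  "fsat D e (FEq s t) = (tval D e s = tval D e t)"
| "fsat D e (FNot \<phi>) = (\<not> fsat D e \<phi>)"
| "fsat D e (FAnd \<phi> \<psi>) = (fsat D e \<phi> \<and> fsat D e \<psi>)"
| "fsat D e (FEx n \<phi>) = (\<exists>a. fsat D (e(n := a)) \<phi>)"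

fun tvars :: "'a dterm \<Rightarrow> nat set" where
  "tvars (DVar n) = {n}"
| "tvars (DPar a) = {}"
| "tvars DZero = {}"
| "tvars DOne = {}"
| "tvars (DAdd s t) = tvars s \<union> tvars t"
| "tvars (DNeg t) = tvars t"
| "tvars (DMul s t) = tvars s \<union> tvars t"
| "tvars (DDer t) = tvars t"

fun tpars :: "'a dterm \<Rightarrow> 'a set" where
  "tpars (DVar n) = {}"
| "tpars (DPar a) = {a}"
| "tpars DZero = {}"
| "tpars DOne = {}"
| "tpars (DAdd s t) = tpars s \<union> tpars t"
| "tpars (DNeg t) = tpars t"
| "tpars (DMul s t) = tpars s \<union> tpars t"
| "tpars (DDer t) = tpars t"

fun fvars :: "'a dform \<Rightarrow> nat set" where
  "fvars (FEq s t) = tvars s \<union> tvars t"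
| "fvars (FNot \<phi>) = fvars \<phi>"
| "fvars (FAnd \<phi> \<psi>) = fvars \<phi> \<union> fvars \<psi>"
| "fvars (FEx n \<phi>) = fvars \<phi> - {n}"

fun fpars :: "'a dform \<Rightarrow> 'a set" where
  "fpars (FEq s t) = tpars s \<union> tpars t"
| "fpars (FNot \<phi>) = fpars \<phi>"
| "fpars (FAnd \<phi> \<psi>) = fpars \<phi> \<union> fpars \<psi>"
| "fpars (FEx n \<phi>) = fpars \<phi>"

definition saturated :: "('a::field \<Rightarrow> 'a) \<Rightarrow> bool" where
  "saturated D \<longleftrightarrow> (\<forall>B \<Phi>. (card_of B, card_of (UNIV :: 'a set)) \<in> ordLess \<and>
     (\<forall>\<phi>\<in>\<Phi>. fpars \<phi> \<subseteq> B \<and> fvars \<phi> \<subseteq> {0}) \<and>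
     (\<forall>\<Phi>0. \<Phi>0 \<subseteq> \<Phi> \<and> finite \<Phi>0 \<longrightarrow> (\<exists>a. \<forall>\<phi>\<in>\<Phi>0. fsat D (\<lambda>_. a) \<phi>))
     \<longrightarrow> (\<exists>a. \<forall>\<phi>\<in>\<Phi>. fsat D (\<lambda>_. a) \<phi>))"

end

theory Submission
  imports Defs "HOL-Library.Nat_Bijection"
begin


lemma dsubD:
  assumes "dsubfield D F"
  shows "0\<in>F" "1\<in>F" "x\<in>F \<Longrightarrow> y\<in>F \<Longrightarrow> x+y\<in>F" "x\<in>F \<Longrightarrow> y\<in>F \<Longrightarrow> x*y\<in>F"
    "x\<in>F \<Longrightarrow> -x\<in>F" "x\<in>F \<Longrightarrow> inverse x\<in>F" "x\<in>F \<Longrightarrow> D x\<in>F"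
    "x\<in>F \<Longrightarrow> y\<in>F \<Longrightarrow> x-y\<in>F" "x\<in>F \<Longrightarrow> y\<in>F \<Longrightarrow> x/y\<in>F"
proof -
  have a: "0\<in>F" "1\<in>F" "\<And>x y. x\<in>F \<Longrightarrow> y\<in>F \<Longrightarrow> x+y\<in>F" "\<And>x y. x\<in>F \<Longrightarrow> y\<in>F \<Longrightarrow> x*y\<in>F"
    "\<And>x. x\<in>F \<Longrightarrow> -x\<in>F" "\<And>x. x\<in>F \<Longrightarrow> inverse x\<in>F" "\<And>x. x\<in>F \<Longrightarrow> D x\<in>F"
    using assms unfolding dsubfield_def by blast+
  show "0\<in>F" "1\<in>F" by (fact a(1), fact a(2))
  show "x\<in>F \<Longrightarrow> y\<in>F \<Longrightarrow> x+y\<in>F" by (fact a(3))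
  show "x\<in>F \<Longrightarrow> y\<in>F \<Longrightarrow> x*y\<in>F" by (fact a(4))
  show "x\<in>F \<Longrightarrow> -x\<in>F" by (fact a(5))
  show "x\<in>F \<Longrightarrow> inverse x\<in>F" by (fact a(6))
  show "x\<in>F \<Longrightarrow> D x\<in>F" by (fact a(7))
  show "x\<in>F \<Longrightarrow> y\<in>F \<Longrightarrow> x-y\<in>F" unfolding diff_conv_add_uminus using a(3,5) by blast
  show "x\<in>F \<Longrightarrow> y\<in>F \<Longrightarrow> x/y\<in>F" unfolding divide_inverse using a(4,6) by blast
qed

lemma dsub_sum:
  assumes "dsubfield D F" "\<forall>i\<in>I. f i \<in> F"
  shows "sum f I \<in> F"
  using assms(2)
proof (induct I rule: infinite_finite_induct)
  case (infinite A) then show ?case using dsubD[OF assms(1)] by simp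
next
  case empty then show ?case using dsubD[OF assms(1)] by simp
next
  case (insert x F') then show ?case using dsubD[OF assms(1)] by simp
qed

lemma dgen_sub: "dsubfield D G \<Longrightarrow> S \<subseteq> G \<Longrightarrow> dgen D S \<subseteq> G"
  unfolding dgen_def by auto

lemma dgen_incl: "S \<subseteq> dgen D S"
  unfolding dgen_def by auto

lemma dgen_mono: "S \<subseteq> T \<Longrightarrow> dgen D S \<subseteq> dgen D T"
  unfolding dgen_def by auto

lemma dgen_dsub: "dsubfield D (dgen D S)"
  unfolding dsubfield_def dgen_def by auto

lemma dsub_UNIV: "dsubfield D UNIV"
  unfolding dsubfield_def by auto

definition hom :: "('a::field \<Rightarrow> 'a) \<Rightarrow> 'a set \<Rightarrow> ('a \<Rightarrow> 'a) \<Rightarrow> bool" where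
  "hom D M f \<longleftrightarrow> (\<forall>x\<in>M. \<forall>y\<in>M. f (x+y) = f x + f y \<and> f (x*y) = f x * f y) \<and> f 1 = 1"

lemma hom_basic:
  assumes M: "dsubfield D M" and h: "hom D M f"
  shows "f 0 = 0" "x\<in>M \<Longrightarrow> f (-x) = - f x" "x\<in>M \<Longrightarrow> f (inverse x) = inverse (f x)"
    "x\<in>M \<Longrightarrow> y\<in>M \<Longrightarrow> f (x-y) = f x - f y" "x\<in>M \<Longrightarrow> y\<in>M \<Longrightarrow> f (x+y) = f x + f y"
    "x\<in>M \<Longrightarrow> y\<in>M \<Longrightarrow> f (x*y) = f x * f y" "f 1 = 1"
proof -
  have add: "\<And>x y. x\<in>M \<Longrightarrow> y\<in>M \<Longrightarrow> f (x+y) = f x + f y" and mul: "\<And>x y. x\<in>M \<Longrightarrow> y\<in>M \<Longrightarrow> f (x*y) = f x * f y"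
    and one: "f 1 = 1" using h unfolding hom_def by auto
  have "f 0 + f 0 = f 0 + 0" using add[of 0 0] dsubD(1)[OF M] by simp
  then show z: "f 0 = 0" by (rule add_left_imp_eq)
  show ng: "f (-x) = - f x" if "x\<in>M" for x
    using add[of x "-x"] that dsubD(5)[OF M that] z by (simp add: eq_neg_iff_add_eq_0 add.commute)
  show "f (inverse x) = inverse (f x)" if "x\<in>M" for x
  proof (cases "x = 0")
    case True then show ?thesis using z by simp
  next
    case False
    have "f x * f (inverse x) = 1" using mul[OF that dsubD(6)[OF M that]] False one by simp
    then show ?thesis by (metis inverse_unique)
  qed
  show "f (x-y) = f x - f y" if "x\<in>M" "y\<in>M" for x y
    using add[OF that(1) dsubD(5)[OF M that(2)]] ng[OF that(2)] by simp
  show "x\<in>M \<Longrightarrow> y\<in>M \<Longrightarrow> f (x+y) = f x + f y" by (rule add)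
  show "x\<in>M \<Longrightarrow> y\<in>M \<Longrightarrow> f (x*y) = f x * f y" by (rule mul)
  show "f 1 = 1" by (rule one)
qed

locale der =
  fixes D :: "'a::field \<Rightarrow> 'a"
  assumes der: "derivation D"
begin

lemma Dadd: "D (x+y) = D x + D y" and Dmul: "D (x*y) = D x * y + x * D y"
  using der unfolding derivation_def by auto

lemma D0: "D 0 = 0"
proof -
  have "D 0 + D 0 = D 0 + 0" using Dadd[of 0 0] by simp
  then show ?thesis by (rule add_left_imp_eq)
qed
lemma D1: "D 1 = 0"
proof -
  have "D 1 + D 1 = D 1 + 0" using Dmul[of 1 1] by simp
  then show ?thesis by (rule add_left_imp_eq)
qed
lemma Dneg: "D (-x) = - D x" using Dadd[of x "-x"] D0 by (simp add: eq_neg_iff_add_eq_0 add.commute)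
lemma Ddiff: "D (x - y) = D x - D y" using Dadd[of x "-y"] Dneg[of y] by simp
lemma Dsum: "D (sum f I) = (\<Sum>i\<in>I. D (f i))"
  by (induct I rule: infinite_finite_induct) (auto simp: D0 Dadd)
lemma Dmc: "D c = 0 \<Longrightarrow> D (a*c) = D a * c" by (simp add: Dmul)
lemma Dinv: "x \<noteq> 0 \<Longrightarrow> D (inverse x) = - D x * inverse x * inverse x"
proof -
  assume x: "x \<noteq> 0"
  have "0 = D (x * inverse x)" using x D1 by simp
  also have "\<dots> = D x * inverse x + x * D (inverse x)" by (rule Dmul)
  finally have "x * D (inverse x) = - D x * inverse x" by (simp add: eq_neg_iff_add_eq_0 add.commute)
  then have "inverse x * (x * D (inverse x)) = inverse x * (- D x * inverse x)" by simp
  then show ?thesis using x by (simp add: field_simps)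
qed
lemma Ddiv: "y \<noteq> 0 \<Longrightarrow> D (x/y) = (y * D x - x * D y) / (y*y)"
proof -
  assume y: "y \<noteq> 0"
  have "D (x/y) = D x * inverse y + x * (- D y * inverse y * inverse y)"
    unfolding divide_inverse Dmul Dinv[OF y] ..
  also have "\<dots> = (y * D x - x * D y) / (y*y)" using y by (simp add: field_simps)
  finally show ?thesis .
qed
lemma Dconstdiv: "D x = 0 \<Longrightarrow> D y = 0 \<Longrightarrow> D (x/y) = 0"
  by (cases "y = 0") (auto simp: D0 Ddiv)

lemma Dinv0: "D x = 0 \<Longrightarrow> D (inverse x) = 0"
  by (cases "x = 0") (simp_all add: D0 Dinv)

lemma consts_dsub: "dsubfield D U \<Longrightarrow> dsubfield D (consts_of D U)"
  unfolding dsubfield_def consts_of_def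
  by (auto simp: D0 D1 Dadd Dmul Dneg Dinv0)

end



context der
begin

lemma LD:
  assumes E: "dsubfield D E"
  shows "finite I \<Longrightarrow> (\<forall>i\<in>I. u i \<in> E \<and> D (c i) = 0) \<Longrightarrow> (\<Sum>i\<in>I. u i * c i) = 0
    \<Longrightarrow> (\<exists>k\<in>I. u k \<noteq> 0)
    \<Longrightarrow> \<exists>\<gamma>. (\<forall>i\<in>I. \<gamma> i \<in> E \<and> D (\<gamma> i) = 0) \<and> (\<exists>k\<in>I. \<gamma> k \<noteq> 0) \<and> (\<Sum>i\<in>I. \<gamma> i * c i) = 0"
proof (induction I arbitrary: u rule: finite_psubset_induct)
  case (psubset I)
  from psubset.prems obtain k where k: "k\<in>I" "u k \<noteq> 0" by auto
  define v where "v i = u i / u k" for i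
  have vE: "\<forall>i\<in>I. v i \<in> E" using psubset.prems k dsubD[OF E] by (auto simp: v_def)
  have "(\<Sum>i\<in>I. v i * c i) = (\<Sum>i\<in>I. u i * c i) / u k"
    by (simp add: v_def sum_divide_distrib)
  then have sv: "(\<Sum>i\<in>I. v i * c i) = 0" using psubset.prems by simp
  have "(\<Sum>i\<in>I. D (v i) * c i) = D (\<Sum>i\<in>I. v i * c i)"
    unfolding Dsum using psubset.prems by (auto intro!: sum.cong simp: Dmc)
  then have dv: "(\<Sum>i\<in>I. D (v i) * c i) = 0" using sv D0 by simp
  have vk: "v k = 1" using k by (simp add: v_def)
  show ?case
  proof (cases "\<forall>i\<in>I. D (v i) = 0")
    case True
    have "\<exists>k\<in>I. v k \<noteq> 0" using vk k by (intro bexI[of _ k]) simp_all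
    then show ?thesis using True vE sv by (intro exI[of _ v]) auto
  next
    case False
    then obtain j where j: "j\<in>I" "D (v j) \<noteq> 0" by auto
    have Dvk: "D (v k) = 0" using vk D1 by simp
    then have jk: "j \<noteq> k" using j by auto
    have s2: "(\<Sum>i\<in>I-{k}. D (v i) * c i) = 0"
      using dv sum.remove[OF psubset.hyps(1) k(1), of "\<lambda>i. D (v i) * c i"] Dvk by simp
    have "\<exists>\<gamma>. (\<forall>i\<in>I-{k}. \<gamma> i \<in> E \<and> D (\<gamma> i) = 0) \<and> (\<exists>k\<in>I-{k}. \<gamma> k \<noteq> 0) \<and> (\<Sum>i\<in>I-{k}. \<gamma> i * c i) = 0"
      apply (rule psubset.IH[of "I-{k}" "\<lambda>i. D (v i)"])
      using k vE psubset.prems j jk dsubD(7)[OF E] s2 by auto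
    then obtain \<gamma> where g: "\<forall>i\<in>I-{k}. \<gamma> i \<in> E \<and> D (\<gamma> i) = 0" "\<exists>k\<in>I-{k}. \<gamma> k \<noteq> 0"
      "(\<Sum>i\<in>I-{k}. \<gamma> i * c i) = 0" by blast
    define \<gamma>' where "\<gamma>' = \<gamma>(k := 0)"
    have "(\<Sum>i\<in>I. \<gamma>' i * c i) = (\<Sum>i\<in>I-{k}. \<gamma> i * c i)"
      using sum.remove[OF psubset.hyps(1) k(1), of "\<lambda>i. \<gamma>' i * c i"]
      by (simp add: \<gamma>'_def)
    then show ?thesis using g dsubD(1)[OF E] D0 by (intro exI[of _ \<gamma>']) (auto simp: \<gamma>'_def)
  qed
qed

lemma subst_rel:
  fixes \<gamma> c a :: "'b \<Rightarrow> 'a"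
  assumes "finite I" "k\<in>I" "\<gamma> k \<noteq> 0" "(\<Sum>i\<in>I. \<gamma> i * c i) = 0"
  shows "(\<Sum>i\<in>I. a i * c i) = (\<Sum>i\<in>I-{k}. (a i - a k * (\<gamma> i / \<gamma> k)) * c i)"
proof -
  have r: "(\<Sum>i\<in>I-{k}. \<gamma> i * c i) = - (\<gamma> k * c k)"
    using assms(4) sum.remove[OF assms(1,2), of "\<lambda>i. \<gamma> i * c i"] by (simp add: eq_neg_iff_add_eq_0 add.commute)
  have "(\<Sum>i\<in>I-{k}. (a i - a k * (\<gamma> i / \<gamma> k)) * c i)
      = (\<Sum>i\<in>I-{k}. a i * c i - (a k / \<gamma> k) * (\<gamma> i * c i))"
    by (rule sum.cong) (use assms(3) in \<open>simp_all add: field_simps\<close>)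
  also have "\<dots> = (\<Sum>i\<in>I-{k}. a i * c i) - (a k / \<gamma> k) * (\<Sum>i\<in>I-{k}. \<gamma> i * c i)"
    by (simp add: sum_subtractf sum_distrib_left)
  also have "\<dots> = (\<Sum>i\<in>I-{k}. a i * c i) + a k * c k" using r assms(3) by simp
  also have "\<dots> = (\<Sum>i\<in>I. a i * c i)"
    using sum.remove[OF assms(1,2), of "\<lambda>i. a i * c i"] by simp
  finally show ?thesis by simp
qed

lemma W:
  assumes F: "dsubfield D F" and h: "\<forall>x\<in>F. \<forall>y\<in>F. \<phi> (x+y) = \<phi> x + \<phi> y \<and> \<phi> (x*y) = \<phi> x * \<phi> y"
    and fx: "\<forall>x\<in>F. D x = 0 \<longrightarrow> \<phi> x = x"
  shows "finite I \<Longrightarrow> (\<forall>i\<in>I. a i \<in> F \<and> D (c i) = 0) \<Longrightarrow> (\<Sum>i\<in>I. a i * c i) = 0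
    \<Longrightarrow> (\<Sum>i\<in>I. \<phi> (a i) * c i) = 0"
proof (induction I arbitrary: a rule: finite_psubset_induct)
  case (psubset I)
  have p0: "\<phi> 0 = 0"
  proof -
    have "\<phi> 0 + \<phi> 0 = \<phi> 0 + 0" using h dsubD(1)[OF F] by (metis add_0_right)
    then show ?thesis by (rule add_left_imp_eq)
  qed
  have pdiff: "\<phi> (x - y) = \<phi> x - \<phi> y" if "x\<in>F" "y\<in>F" for x y
  proof -
    have "\<phi> (x - y + y) = \<phi> (x-y) + \<phi> y" using h that dsubD(8)[OF F] by blast
    then show ?thesis by simp
  qed
  show ?case
  proof (cases "\<forall>i\<in>I. a i = 0")
    case True then show ?thesis using p0 by simp
  next
    case False
    then obtain \<gamma> where g: "\<forall>i\<in>I. \<gamma> i \<in> F \<and> D (\<gamma> i) = 0" "\<exists>k\<in>I. \<gamma> k \<noteq> 0" "(\<Sum>i\<in>I. \<gamma> i * c i) = 0"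
      using LD[OF F psubset.hyps(1), of a c] psubset.prems by blast
    then obtain k where k: "k\<in>I" "\<gamma> k \<noteq> 0" by blast
    define a' where "a' i = a i - a k * (\<gamma> i / \<gamma> k)" for i
    have qF: "\<gamma> i / \<gamma> k \<in> F" "D (\<gamma> i / \<gamma> k) = 0" if "i\<in>I" for i
      using g that k dsubD(9)[OF F] Dconstdiv by auto
    have a'F: "\<forall>i\<in>I. a' i \<in> F" unfolding a'_def using psubset.prems qF k dsubD(4,8)[OF F] by blast
    have "(\<Sum>i\<in>I-{k}. a' i * c i) = 0"
      using subst_rel[OF psubset.hyps(1) k g(3), of a] psubset.prems by (simp add: a'_def)
    then have s: "(\<Sum>i\<in>I-{k}. \<phi> (a' i) * c i) = 0"
      using psubset.IH[of "I-{k}" a'] k a'F psubset.prems by auto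
    have pa': "\<phi> (a' i) = \<phi> (a i) - \<phi> (a k) * (\<gamma> i / \<gamma> k)" if "i\<in>I" for i
    proof -
      have ai: "a i \<in> F" and ak: "a k \<in> F" using psubset.prems that k by auto
      have m: "a k * (\<gamma> i / \<gamma> k) \<in> F" using dsubD(4)[OF F ak qF(1)[OF that]] .
      have "\<phi> (a' i) = \<phi> (a i) - \<phi> (a k * (\<gamma> i / \<gamma> k))"
        unfolding a'_def by (rule pdiff[OF ai m])
      also have "\<phi> (a k * (\<gamma> i / \<gamma> k)) = \<phi> (a k) * \<phi> (\<gamma> i / \<gamma> k)"
        using h ak qF(1)[OF that] by blast
      also have "\<phi> (\<gamma> i / \<gamma> k) = \<gamma> i / \<gamma> k"
        using fx qF[OF that] by blast
      finally show ?thesis .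
    qed
    have "(\<Sum>i\<in>I. \<phi> (a i) * c i) = (\<Sum>i\<in>I-{k}. (\<phi> (a i) - \<phi> (a k) * (\<gamma> i / \<gamma> k)) * c i)"
      by (rule subst_rel[OF psubset.hyps(1) k g(3)])
    also have "\<dots> = (\<Sum>i\<in>I-{k}. \<phi> (a' i) * c i)" using pa' by (auto intro!: sum.cong)
    finally show ?thesis using s by simp
  qed
qed

lemma Qp:
  assumes U: "dsubfield D U" and F: "dsubfield D F" and FU: "F \<subseteq> U" and CU: "consts_of D U \<subseteq> F"
    and xU: "x \<in> U"
  shows "finite I \<Longrightarrow> (\<forall>i\<in>I. a i \<in> F \<and> b i \<in> F \<and> D (c i) = 0) \<Longrightarrow> (\<Sum>i\<in>I. a i * c i) \<noteq> 0
    \<Longrightarrow> x * (\<Sum>i\<in>I. a i * c i) = (\<Sum>i\<in>I. b i * c i) \<Longrightarrow> x \<in> F"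
proof (induction I arbitrary: a b rule: finite_psubset_induct)
  case (psubset I)
  define u where "u i = x * a i - b i" for i
  have uU: "\<forall>i\<in>I. u i \<in> U" unfolding u_def using psubset.prems FU xU dsubD(4,8)[OF U] by blast
  have "(\<Sum>i\<in>I. u i * c i) = (\<Sum>i\<in>I. x * (a i * c i) - b i * c i)"
    by (rule sum.cong) (simp_all add: u_def algebra_simps)
  also have "\<dots> = x * (\<Sum>i\<in>I. a i * c i) - (\<Sum>i\<in>I. b i * c i)"
    by (simp only: sum_subtractf sum_distrib_left)
  finally have su: "(\<Sum>i\<in>I. u i * c i) = 0" using psubset.prems(3) by simp
  show ?case
  proof (cases "\<forall>i\<in>I. u i = 0")
    case True
    obtain k where k: "k\<in>I" "a k * c k \<noteq> 0" using sum.not_neutral_contains_not_neutral[OF psubset.prems(2)] by blast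
    then have k: "k\<in>I" "a k \<noteq> 0" by auto
    have "x = b k / a k" using True k by (simp add: u_def field_simps)
    then show ?thesis using psubset.prems k dsubD(9)[OF F] by auto
  next
    case False
    then obtain \<gamma> where g: "\<forall>i\<in>I. \<gamma> i \<in> U \<and> D (\<gamma> i) = 0" "\<exists>k\<in>I. \<gamma> k \<noteq> 0" "(\<Sum>i\<in>I. \<gamma> i * c i) = 0"
      using LD[OF U psubset.hyps(1), of u c] psubset.prems uU su by blast
    then obtain k where k: "k\<in>I" "\<gamma> k \<noteq> 0" by blast
    have gF: "\<gamma> i \<in> F" if "i\<in>I" for i
    proof -
      have "\<gamma> i \<in> consts_of D U" using g that unfolding consts_of_def by blast
      then show ?thesis using CU by blast
    qed
    define a' where "a' i = a i - a k * (\<gamma> i / \<gamma> k)" for i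
    define b' where "b' i = b i - b k * (\<gamma> i / \<gamma> k)" for i
    have F': "\<forall>i\<in>I-{k}. a' i \<in> F \<and> b' i \<in> F \<and> D (c i) = 0"
    proof
      fix i assume i: "i \<in> I-{k}"
      have "a i \<in> F" "b i \<in> F" "a k \<in> F" "b k \<in> F" "\<gamma> i \<in> F" "\<gamma> k \<in> F" "D (c i) = 0"
        using psubset.prems(1) i k gF by auto
      then show "a' i \<in> F \<and> b' i \<in> F \<and> D (c i) = 0"
        unfolding a'_def b'_def by (simp add: dsubD(4,8,9)[OF F])
    qed
    have ea: "(\<Sum>i\<in>I. a i * c i) = (\<Sum>i\<in>I-{k}. a' i * c i)"
      unfolding a'_def by (rule subst_rel[OF psubset.hyps(1) k g(3)])
    have eb: "(\<Sum>i\<in>I. b i * c i) = (\<Sum>i\<in>I-{k}. b' i * c i)"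
      unfolding b'_def by (rule subst_rel[OF psubset.hyps(1) k g(3)])
    show ?thesis
      apply (rule psubset.IH[of "I-{k}" a' b'])
      using k F' psubset.prems ea eb by auto
  qed
qed

end



definition isrep :: "'a::field set \<Rightarrow> 'a set \<Rightarrow> 'a \<Rightarrow> nat set \<Rightarrow> (nat \<Rightarrow> 'a) \<Rightarrow> (nat \<Rightarrow> 'a) \<Rightarrow> (nat \<Rightarrow> 'a) \<Rightarrow> bool" where
  "isrep F C x I a b c \<longleftrightarrow> finite I \<and> (\<forall>i\<in>I. a i \<in> F \<and> b i \<in> F \<and> c i \<in> C) \<and>
     (\<Sum>i\<in>I. a i * c i) \<noteq> 0 \<and> x * (\<Sum>i\<in>I. a i * c i) = (\<Sum>i\<in>I. b i * c i)"

definition pI :: "nat set \<Rightarrow> nat set \<Rightarrow> nat set" where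
  "pI I J = prod_encode ` (I \<times> J)"

definition pm :: "(nat \<Rightarrow> 'a::times) \<Rightarrow> (nat \<Rightarrow> 'a) \<Rightarrow> nat \<Rightarrow> 'a" where
  "pm f g n = f (fst (prod_decode n)) * g (snd (prod_decode n))"

lemma pI_mem: "n \<in> pI I J \<Longrightarrow> fst (prod_decode n) \<in> I \<and> snd (prod_decode n) \<in> J"
  unfolding pI_def by auto

lemma pI_fin: "finite I \<Longrightarrow> finite J \<Longrightarrow> finite (pI I J)"
  unfolding pI_def by auto

lemma pm_sum:
  fixes p q c c' :: "nat \<Rightarrow> 'a::comm_ring_1"
  assumes "finite I" "finite J"
  shows "(\<Sum>n\<in>pI I J. pm p q n * pm c c' n) = (\<Sum>i\<in>I. p i * c i) * (\<Sum>j\<in>J. q j * c' j)"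
proof -
  have "(\<Sum>n\<in>pI I J. pm p q n * pm c c' n) = (\<Sum>x\<in>I \<times> J. pm p q (prod_encode x) * pm c c' (prod_encode x))"
    unfolding pI_def by (subst sum.reindex) (auto simp: inj_prod_encode)
  also have "\<dots> = (\<Sum>(i,j)\<in>I \<times> J. (p i * c i) * (q j * c' j))"
    by (auto intro!: sum.cong simp: pm_def mult_ac)
  also have "\<dots> = (\<Sum>i\<in>I. p i * c i) * (\<Sum>j\<in>J. q j * c' j)"
    by (simp add: sum_product sum.cartesian_product)
  finally show ?thesis .
qed

definition cset :: "('a::field \<Rightarrow> 'a) \<Rightarrow> 'a set \<Rightarrow> bool" where
  "cset D C \<longleftrightarrow> (\<forall>c\<in>C. D c = 0) \<and> 1 \<in> C \<and> (\<forall>c\<in>C. \<forall>d\<in>C. c*d \<in> C)"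

context der
begin

lemma cset_consts: "dsubfield D U \<Longrightarrow> cset D (consts_of D U)"
  using consts_dsub[of U] unfolding cset_def dsubfield_def consts_of_def by auto

context
  fixes F C
  assumes F: "dsubfield D F" and C: "cset D C"
begin

lemma rep_base: "x \<in> F \<Longrightarrow> isrep F C x {0} (\<lambda>_. 1) (\<lambda>_. x) (\<lambda>_. 1)"
  using F C unfolding isrep_def cset_def dsubfield_def by auto

lemma rep_const: "x \<in> C \<Longrightarrow> isrep F C x {0,1} (\<lambda>i. if i=0 then 1 else 0) (\<lambda>i. if i=0 then 0 else 1) (\<lambda>i. if i=0 then 1 else x)"
  using F C unfolding isrep_def cset_def dsubfield_def by auto

lemma rep_mul:
  assumes "isrep F C x I a b c" "isrep F C y J a' b' c'"
  shows "isrep F C (x*y) (pI I J) (pm a a') (pm b b') (pm c c')"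
proof -
  have f: "finite I" "finite J" using assms unfolding isrep_def by auto
  have m: "\<forall>n\<in>pI I J. pm a a' n \<in> F \<and> pm b b' n \<in> F \<and> pm c c' n \<in> C"
    using assms pI_mem F C unfolding isrep_def cset_def pm_def by (auto intro: dsubD)
  define A1 where "A1 = (\<Sum>i\<in>I. a i * c i)"
  define B1 where "B1 = (\<Sum>i\<in>I. b i * c i)"
  define A2 where "A2 = (\<Sum>j\<in>J. a' j * c' j)"
  define B2 where "B2 = (\<Sum>j\<in>J. b' j * c' j)"
  have r: "A1 \<noteq> 0" "A2 \<noteq> 0" "x * A1 = B1" "y * A2 = B2"
    using assms unfolding isrep_def A1_def A2_def B1_def B2_def by auto
  have "x * y * (A1 * A2) = (x * A1) * (y * A2)" by (simp add: ac_simps)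
  then have e: "x * y * (A1 * A2) = B1 * B2" using r by simp
  show ?thesis
    unfolding isrep_def pm_sum[OF f] A1_def[symmetric] A2_def[symmetric] B1_def[symmetric] B2_def[symmetric]
    using pI_fin[OF f] m r e by simp
qed

lemma rep_add:
  assumes "isrep F C x I a b c" "isrep F C y J a' b' c'"
  shows "isrep F C (x+y) (pI I J) (pm a a') (\<lambda>n. pm b a' n + pm a b' n) (pm c c')"
proof -
  have f: "finite I" "finite J" using assms unfolding isrep_def by auto
  have m: "\<forall>n\<in>pI I J. pm a a' n \<in> F \<and> pm b a' n + pm a b' n \<in> F \<and> pm c c' n \<in> C"
  proof
    fix n assume "n \<in> pI I J"
    then have ij: "fst (prod_decode n) \<in> I" "snd (prod_decode n) \<in> J" using pI_mem by auto
    show "pm a a' n \<in> F \<and> pm b a' n + pm a b' n \<in> F \<and> pm c c' n \<in> C"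
      unfolding pm_def using assms ij C unfolding isrep_def cset_def
      by (auto intro!: dsubD(3,4)[OF F])
  qed
  have e: "(\<Sum>n\<in>pI I J. (pm b a' n + pm a b' n) * pm c c' n) =
     (\<Sum>i\<in>I. b i * c i) * (\<Sum>j\<in>J. a' j * c' j) + (\<Sum>i\<in>I. a i * c i) * (\<Sum>j\<in>J. b' j * c' j)"
    by (simp add: distrib_right sum.distrib pm_sum[OF f])
  define A1 where "A1 = (\<Sum>i\<in>I. a i * c i)"
  define B1 where "B1 = (\<Sum>i\<in>I. b i * c i)"
  define A2 where "A2 = (\<Sum>j\<in>J. a' j * c' j)"
  define B2 where "B2 = (\<Sum>j\<in>J. b' j * c' j)"
  have r: "A1 \<noteq> 0" "A2 \<noteq> 0" "x * A1 = B1" "y * A2 = B2"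
    using assms unfolding isrep_def A1_def A2_def B1_def B2_def by auto
  have "(x + y) * (A1 * A2) = (x * A1) * A2 + A1 * (y * A2)" by (simp add: algebra_simps)
  then have e2: "(x + y) * (A1 * A2) = B1 * A2 + A1 * B2" using r by simp
  show ?thesis
    unfolding isrep_def pm_sum[OF f] e A1_def[symmetric] A2_def[symmetric] B1_def[symmetric] B2_def[symmetric]
    using pI_fin[OF f] m r e2 by simp
qed

lemma rep_neg:
  assumes "isrep F C x I a b c"
  shows "isrep F C (-x) I a (\<lambda>i. - b i) c"
  using assms F unfolding isrep_def by (auto simp: sum_negf dsubfield_def)

lemma rep_inv:
  assumes "isrep F C x I a b c" "x \<noteq> 0"
  shows "isrep F C (inverse x) I b a c"
proof -
  from assms have A: "(\<Sum>i\<in>I. a i * c i) \<noteq> 0" and e: "x * (\<Sum>i\<in>I. a i * c i) = (\<Sum>i\<in>I. b i * c i)"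
    unfolding isrep_def by auto
  have "(\<Sum>i\<in>I. b i * c i) \<noteq> 0" using A e assms(2) by (metis mult_eq_0_iff)
  moreover have "inverse x * (\<Sum>i\<in>I. b i * c i) = (\<Sum>i\<in>I. a i * c i)"
    using e[symmetric] assms(2) by simp
  ultimately show ?thesis using assms(1) unfolding isrep_def by auto
qed

lemma Dlin: "\<forall>i\<in>I. D (c i) = 0 \<Longrightarrow> D (\<Sum>i\<in>I. b i * c i) = (\<Sum>i\<in>I. D (b i) * c i)"
  unfolding Dsum by (auto intro!: sum.cong simp: Dmc)

lemma rep_D:
  assumes r: "isrep F C x I a b c"
  shows "isrep F C (D x) (pI I I) (pm a a) (\<lambda>n. pm a (\<lambda>i. D (b i)) n - pm b (\<lambda>i. D (a i)) n) (pm c c)"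
proof -
  have f: "finite I" using assms unfolding isrep_def by auto
  have m: "\<forall>n\<in>pI I I. pm a a n \<in> F \<and> pm a (\<lambda>i. D (b i)) n - pm b (\<lambda>i. D (a i)) n \<in> F \<and> pm c c n \<in> C"
  proof
    fix n assume "n \<in> pI I I"
    then have ij: "fst (prod_decode n) \<in> I" "snd (prod_decode n) \<in> I" using pI_mem by auto
    show "pm a a n \<in> F \<and> pm a (\<lambda>i. D (b i)) n - pm b (\<lambda>i. D (a i)) n \<in> F \<and> pm c c n \<in> C"
      unfolding pm_def using assms ij C unfolding isrep_def cset_def
      by (auto intro!: dsubD(4,7,8)[OF F])
  qed
  define A where "A = (\<Sum>i\<in>I. a i * c i)"
  define B where "B = (\<Sum>i\<in>I. b i * c i)"
  have cD: "\<forall>i\<in>I. D (c i) = 0" using r C unfolding isrep_def cset_def by auto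
  have DA: "D A = (\<Sum>i\<in>I. D (a i) * c i)" unfolding A_def by (rule Dlin[OF cD])
  have DB: "D B = (\<Sum>i\<in>I. D (b i) * c i)" unfolding B_def by (rule Dlin[OF cD])
  have A0: "A \<noteq> 0" and xAB: "x * A = B" using r unfolding isrep_def A_def B_def by auto
  have e: "(\<Sum>n\<in>pI I I. (pm a (\<lambda>i. D (b i)) n - pm b (\<lambda>i. D (a i)) n) * pm c c n) = A * D B - B * D A"
    unfolding DA DB by (simp add: left_diff_distrib sum_subtractf pm_sum[OF f f] A_def B_def)
  have "D B = D x * A + x * D A" using xAB Dmul by metis
  then have "D x * (A * A) = A * D B - B * D A" using xAB[symmetric] by (simp add: algebra_simps)
  then show ?thesis
    unfolding isrep_def pm_sum[OF f f] e using pI_fin[OF f f] m A0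
    by (simp add: A_def[symmetric])
qed

lemma rep_val:
  assumes G: "dsubfield D G" "F \<subseteq> G" "C \<subseteq> G" and r: "isrep F C x I a b c"
  shows "x \<in> G"
proof -
  have A: "(\<Sum>i\<in>I. a i * c i) \<in> G" "(\<Sum>i\<in>I. b i * c i) \<in> G"
    using r G by (auto intro!: dsub_sum dsubD(4)[OF G(1)] simp: isrep_def)
  have "x = (\<Sum>i\<in>I. b i * c i) / (\<Sum>i\<in>I. a i * c i)"
    using r unfolding isrep_def by (simp add: field_simps)
  then show ?thesis using A dsubD(9)[OF G(1)] by simp
qed

lemma repset_eq: "x \<in> dgen D (F \<union> C) \<longleftrightarrow> (\<exists>I a b c. isrep F C x I a b c)"
proof
  assume "\<exists>I a b c. isrep F C x I a b c"
  then show "x \<in> dgen D (F \<union> C)" using rep_val unfolding dgen_def by blast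
next
  define R where "R = {x. \<exists>I a b c. isrep F C x I a b c}"
  have FR: "F \<subseteq> R" using rep_base unfolding R_def by blast
  have CR: "C \<subseteq> R" using rep_const unfolding R_def by blast
  have "dsubfield D R"
    unfolding dsubfield_def
  proof (intro conjI ballI)
    show "0 \<in> R" "1 \<in> R" using FR dsubD[OF F] by auto
  next
    fix x y assume "x\<in>R" "y\<in>R"
    then obtain I a b c J a' b' c' where r: "isrep F C x I a b c" "isrep F C y J a' b' c'"
      unfolding R_def by blast
    show "x + y \<in> R" unfolding R_def using rep_add[OF r] by blast
    show "x * y \<in> R" unfolding R_def using rep_mul[OF r] by blast
  next
    fix x assume x: "x\<in>R"
    then obtain I a b c where r: "isrep F C x I a b c" unfolding R_def by blast
    show "-x \<in> R" unfolding R_def using rep_neg[OF r] by blast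
    show "D x \<in> R" unfolding R_def using rep_D[OF r] by blast
    show "inverse x \<in> R"
    proof (cases "x = 0")
      case True then show ?thesis using FR dsubD(1)[OF F] by auto
    next
      case False then show ?thesis using x unfolding R_def using rep_inv by blast
    qed
  qed
  then have "dgen D (F \<union> C) \<subseteq> R" using FR CR by (intro dgen_sub) auto
  then show "x \<in> dgen D (F \<union> C) \<Longrightarrow> \<exists>I a b c. isrep F C x I a b c" unfolding R_def by blast
qed

end

end




lemma dHom_hom: "\<tau> \<in> dHom D K L X \<Longrightarrow> hom D L \<tau>"
  unfolding dHom_def hom_def by auto

lemma agree:
  assumes M: "dsubfield D M" and hf: "hom D M f" and hh: "hom D M h"
    and df: "\<forall>x\<in>M. f (D x) = D (f x)" and dh: "\<forall>x\<in>M. h (D x) = D (h x)"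
    and S: "S \<subseteq> M" and eq: "\<forall>x\<in>S. f x = h x" and x: "x \<in> dgen D S"
  shows "f x = h x"
proof -
  note f = hom_basic[OF M hf] and g = hom_basic[OF M hh]
  have "dsubfield D {x\<in>M. f x = h x}"
    unfolding dsubfield_def using f g dsubD[OF M] df dh by auto
  then have "dgen D S \<subseteq> {x\<in>M. f x = h x}" using S eq by (intro dgen_sub) auto
  then show ?thesis using x by auto
qed

lemma img_dsub:
  assumes M: "dsubfield D M" and hf: "hom D M f" and df: "\<forall>x\<in>M. f (D x) = D (f x)"
  shows "dsubfield D (f ` M)"
proof -
  note f = hom_basic[OF M hf]
  show ?thesis unfolding dsubfield_def
  proof (intro conjI ballI)
    show "0 \<in> f ` M" "1 \<in> f ` M" using f dsubD[OF M] by (metis image_eqI)+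
  next
    fix x y assume "x \<in> f ` M" "y \<in> f ` M"
    then obtain x0 y0 where "x0\<in>M" "y0\<in>M" "x = f x0" "y = f y0" by auto
    then show "x + y \<in> f ` M" "x * y \<in> f ` M" using f dsubD[OF M] by (metis image_eqI)+
  next
    fix x assume "x \<in> f ` M"
    then obtain x0 where "x0\<in>M" "x = f x0" by auto
    then show "-x \<in> f ` M" "inverse x \<in> f ` M" "D x \<in> f ` M" using f df dsubD[OF M] by (metis image_eqI)+
  qed
qed

lemma pre_dsub:
  assumes M: "dsubfield D M" and N: "dsubfield D N" and hf: "hom D M f" and df: "\<forall>x\<in>M. f (D x) = D (f x)"
  shows "dsubfield D {x\<in>M. f x \<in> N}"
  unfolding dsubfield_def using hom_basic[OF M hf] dsubD[OF M] dsubD[OF N] df by auto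

definition extf :: "('a::field \<Rightarrow> 'a) \<Rightarrow> 'a set \<Rightarrow> ('a \<Rightarrow> 'a) \<Rightarrow> 'a \<Rightarrow> 'a" where
  "extf D L \<tau> = restrict (\<lambda>x. SOME y. \<exists>I a b c. isrep L (consts_of D UNIV) x I a b c \<and>
       (\<Sum>i\<in>I. \<tau> (a i) * c i) \<noteq> 0 \<and> y * (\<Sum>i\<in>I. \<tau> (a i) * c i) = (\<Sum>i\<in>I. \<tau> (b i) * c i))
     (dgen D (L \<union> consts_of D UNIV))"

locale extc = der D for D :: "'a::field \<Rightarrow> 'a" +
  fixes K L \<tau>
  assumes K: "dsubfield D K" and L: "dsubfield D L" and KL: "K \<subseteq> L"
    and tau: "\<tau> \<in> dHom D K L UNIV" and st: "strong D L \<tau>"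
begin

abbreviation "C \<equiv> consts_of D UNIV"
abbreviation "M \<equiv> dgen D (L \<union> C)"
abbreviation "g \<equiv> extf D L \<tau>"

lemma cC: "cset D C" by (rule cset_consts[OF dsub_UNIV])
lemma th: "hom D L \<tau>" by (rule dHom_hom[OF tau])
lemmas tb = hom_basic[OF L th]
lemma tD: "x \<in> L \<Longrightarrow> \<tau> (D x) = D (\<tau> x)" using tau unfolding dHom_def by auto
lemma tinj: "inj_on \<tau> L" using tau unfolding dHom_def by auto
lemma tK: "x \<in> K \<Longrightarrow> \<tau> x = x" using tau unfolding dHom_def by auto
lemma tfix: "x \<in> L \<Longrightarrow> D x = 0 \<Longrightarrow> \<tau> x = x" using st unfolding strong_def consts_of_def by auto
lemma tM: "M = dgen D (\<tau> ` L \<union> C)" using st unfolding strong_def by auto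
lemma tL: "dsubfield D (\<tau> ` L)" using img_dsub[OF L th] tD by auto
lemma Mdsub: "dsubfield D M" by (rule dgen_dsub)
lemma LM: "L \<subseteq> M" and CM: "C \<subseteq> M" using dgen_incl[of "L \<union> C" D] by auto
lemmas repL = repset_eq[OF L cC]
lemmas repT = repset_eq[OF tL cC]

lemma cD: "isrep L C x I a b c \<Longrightarrow> \<forall>i\<in>I. a i \<in> L \<and> b i \<in> L \<and> D (c i) = 0"
  unfolding isrep_def consts_of_def by auto

lemma Wt: "finite I \<Longrightarrow> \<forall>i\<in>I. a i \<in> L \<and> D (c i) = 0 \<Longrightarrow> (\<Sum>i\<in>I. a i * c i) = 0
   \<Longrightarrow> (\<Sum>i\<in>I. \<tau> (a i) * c i) = 0"
  by (rule W[OF L _ _]) (use tb tfix in auto)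

lemma Wti:
  assumes "finite I" "\<forall>i\<in>I. a i \<in> L \<and> D (c i) = 0" "(\<Sum>i\<in>I. \<tau> (a i) * c i) = 0"
  shows "(\<Sum>i\<in>I. a i * c i) = 0"
proof -
  let ?\<phi> = "inv_into L \<tau>"
  have inv: "?\<phi> (\<tau> x) = x" if "x \<in> L" for x using tinj that by (simp add: inv_into_f_f)
  have h: "\<forall>x\<in>\<tau>`L. \<forall>y\<in>\<tau>`L. ?\<phi> (x+y) = ?\<phi> x + ?\<phi> y \<and> ?\<phi> (x*y) = ?\<phi> x * ?\<phi> y"
  proof (intro ballI)
    fix x y assume "x \<in> \<tau>`L" "y \<in> \<tau>`L"
    then obtain x0 y0 where "x0\<in>L" "y0\<in>L" "x = \<tau> x0" "y = \<tau> y0" by auto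
    then show "?\<phi> (x+y) = ?\<phi> x + ?\<phi> y \<and> ?\<phi> (x*y) = ?\<phi> x * ?\<phi> y"
      using tb inv dsubD[OF L] by (metis)
  qed
  have fx: "\<forall>x\<in>\<tau>`L. D x = 0 \<longrightarrow> ?\<phi> x = x"
  proof (intro ballI impI)
    fix x assume "x \<in> \<tau>`L" "D x = 0"
    then obtain x0 where x0: "x0\<in>L" "x = \<tau> x0" by auto
    then have "\<tau> (D x0) = \<tau> 0" using tD \<open>D x = 0\<close> tb by simp
    then have "D x0 = 0" using tinj x0 dsubD[OF L] by (meson inj_on_def)
    then have t: "\<tau> x0 = x0" using tfix x0(1) by blast
    have "?\<phi> x = ?\<phi> (\<tau> x0)" using x0(2) by simp
    also have "\<dots> = x0" by (rule inv[OF x0(1)])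
    also have "\<dots> = x" using t x0(2) by simp
    finally show "?\<phi> x = x" .
  qed
  have "(\<Sum>i\<in>I. ?\<phi> (\<tau> (a i)) * c i) = 0"
    by (rule W[OF tL h fx assms(1)]) (use assms in auto)
  then show ?thesis using assms(2) inv by simp
qed

lemma tA_nz:
  assumes r: "isrep L C x I a b c" shows "(\<Sum>i\<in>I. \<tau> (a i) * c i) \<noteq> 0"
proof
  assume z: "(\<Sum>i\<in>I. \<tau> (a i) * c i) = 0"
  have f: "finite I" using r unfolding isrep_def by auto
  have "\<forall>i\<in>I. a i \<in> L \<and> D (c i) = 0" using cD[OF r] by auto
  then have "(\<Sum>i\<in>I. a i * c i) = 0" using Wti[OF f _ z] by blast
  then show False using r unfolding isrep_def by auto
qed

lemma tpm: "n \<in> pI I J \<Longrightarrow> \<forall>i\<in>I. p i \<in> L \<Longrightarrow> \<forall>j\<in>J. q j \<in> L \<Longrightarrow>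
   \<tau> (pm p q n) = pm (\<lambda>i. \<tau> (p i)) (\<lambda>j. \<tau> (q j)) n"
  using pI_mem[of n I J] tb unfolding pm_def by auto

lemma wd:
  assumes r1: "isrep L C x I a b c" and r2: "isrep L C x J a' b' c'"
  shows "(\<Sum>i\<in>I. \<tau> (b i) * c i) * (\<Sum>j\<in>J. \<tau> (a' j) * c' j)
       = (\<Sum>i\<in>I. \<tau> (a i) * c i) * (\<Sum>j\<in>J. \<tau> (b' j) * c' j)"
proof -
  have f: "finite I" "finite J" using r1 r2 unfolding isrep_def by auto
  note c1 = cD[OF r1] and c2 = cD[OF r2]
  define e where "e n = pm b a' n - pm a b' n" for n
  have eL: "\<forall>n\<in>pI I J. e n \<in> L \<and> D (pm c c' n) = 0"
  proof
    fix n assume "n \<in> pI I J"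
    then have ij: "fst (prod_decode n) \<in> I" "snd (prod_decode n) \<in> J" using pI_mem by auto
    show "e n \<in> L \<and> D (pm c c' n) = 0"
      unfolding e_def pm_def using c1 c2 ij by (auto simp: Dmul intro!: dsubD(4,8)[OF L])
  qed
  have "(\<Sum>n\<in>pI I J. e n * pm c c' n) =
      (\<Sum>i\<in>I. b i * c i) * (\<Sum>j\<in>J. a' j * c' j) - (\<Sum>i\<in>I. a i * c i) * (\<Sum>j\<in>J. b' j * c' j)"
    unfolding e_def by (simp add: left_diff_distrib sum_subtractf pm_sum[OF f])
  also have "\<dots> = 0"
  proof -
    define A where "A = (\<Sum>i\<in>I. a i * c i)"
    define A' where "A' = (\<Sum>j\<in>J. a' j * c' j)"
    have e1: "x * A = (\<Sum>i\<in>I. b i * c i)" and e2: "x * A' = (\<Sum>j\<in>J. b' j * c' j)"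
      using r1 r2 unfolding isrep_def A_def A'_def by auto
    have "(x * A) * A' = A * (x * A')" by (simp add: ac_simps)
    then show ?thesis unfolding e1[symmetric] e2[symmetric] A_def[symmetric] A'_def[symmetric] by simp
  qed
  finally have "(\<Sum>n\<in>pI I J. \<tau> (e n) * pm c c' n) = 0"
    using Wt[OF pI_fin[OF f] eL] by blast
  moreover have "\<forall>n\<in>pI I J. \<tau> (e n) = pm (\<lambda>i. \<tau> (b i)) (\<lambda>j. \<tau> (a' j)) n - pm (\<lambda>i. \<tau> (a i)) (\<lambda>j. \<tau> (b' j)) n"
  proof
    fix n assume "n \<in> pI I J"
    then have ij: "fst (prod_decode n) \<in> I" "snd (prod_decode n) \<in> J" using pI_mem by auto
    define i where "i = fst (prod_decode n)"
    define j where "j = snd (prod_decode n)"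
    have m: "b i \<in> L" "a' j \<in> L" "a i \<in> L" "b' j \<in> L" using c1 c2 ij unfolding i_def j_def by auto
    have "\<tau> (b i * a' j - a i * b' j) = \<tau> (b i) * \<tau> (a' j) - \<tau> (a i) * \<tau> (b' j)"
      using tb(4)[OF dsubD(4)[OF L m(1,2)] dsubD(4)[OF L m(3,4)]] tb(6)[OF m(1,2)] tb(6)[OF m(3,4)] by simp
    then show "\<tau> (e n) = pm (\<lambda>i. \<tau> (b i)) (\<lambda>j. \<tau> (a' j)) n - pm (\<lambda>i. \<tau> (a i)) (\<lambda>j. \<tau> (b' j)) n"
      unfolding e_def pm_def i_def j_def .
  qed
  ultimately have "(\<Sum>n\<in>pI I J. (pm (\<lambda>i. \<tau> (b i)) (\<lambda>j. \<tau> (a' j)) n - pm (\<lambda>i. \<tau> (a i)) (\<lambda>j. \<tau> (b' j)) n) * pm c c' n) = 0"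
    by simp
  then show ?thesis by (simp add: left_diff_distrib sum_subtractf pm_sum[OF f])
qed

lemma ext_eq:
  assumes r: "isrep L C x I a b c"
  shows "g x = (\<Sum>i\<in>I. \<tau> (b i) * c i) / (\<Sum>i\<in>I. \<tau> (a i) * c i)"
proof -
  have xM: "x \<in> M" using r repL by blast
  let ?P = "\<lambda>y. \<exists>I a b c. isrep L C x I a b c \<and>
       (\<Sum>i\<in>I. \<tau> (a i) * c i) \<noteq> 0 \<and> y * (\<Sum>i\<in>I. \<tau> (a i) * c i) = (\<Sum>i\<in>I. \<tau> (b i) * c i)"
  have "?P ((\<Sum>i\<in>I. \<tau> (b i) * c i) / (\<Sum>i\<in>I. \<tau> (a i) * c i))"
    apply (rule exI[of _ I], rule exI[of _ a], rule exI[of _ b], rule exI[of _ c])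
    apply (intro conjI)
      apply (rule r)
     apply (rule tA_nz[OF r])
    using tA_nz[OF r] by (simp add: divide_inverse mult.assoc)
  then have "?P (SOME y. ?P y)" by (rule someI[of ?P])
  then obtain J a' b' c' where r2: "isrep L C x J a' b' c'" and
     n2: "(\<Sum>i\<in>J. \<tau> (a' i) * c' i) \<noteq> 0" and
     e2: "(SOME y. ?P y) * (\<Sum>i\<in>J. \<tau> (a' i) * c' i) = (\<Sum>i\<in>J. \<tau> (b' i) * c' i)" by blast
  have "g x = (SOME y. ?P y)" using xM unfolding extf_def by simp
  also have "\<dots> = (\<Sum>i\<in>J. \<tau> (b' i) * c' i) / (\<Sum>i\<in>J. \<tau> (a' i) * c' i)" using e2 n2 by (simp add: field_simps)
  also have "\<dots> = (\<Sum>i\<in>I. \<tau> (b i) * c i) / (\<Sum>i\<in>I. \<tau> (a i) * c i)"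
    using wd[OF r r2] n2 tA_nz[OF r] by (simp add: field_simps)
  finally show ?thesis .
qed

end



context extc
begin

lemma getrep: "x \<in> M \<Longrightarrow> \<exists>I a b c. isrep L C x I a b c" using repL by blast

lemma ext_L: "x \<in> L \<Longrightarrow> g x = \<tau> x"
  using ext_eq[OF rep_base[OF L cC]] tb by simp

lemma ext_C: "x \<in> C \<Longrightarrow> g x = x"
  using ext_eq[OF rep_const[OF L cC]] tb by simp

lemma tsum:
  assumes "finite I" "finite J" "\<forall>i\<in>I. p i \<in> L" "\<forall>j\<in>J. q j \<in> L"
  shows "(\<Sum>n\<in>pI I J. \<tau> (pm p q n) * pm c c' n) = (\<Sum>i\<in>I. \<tau> (p i) * c i) * (\<Sum>j\<in>J. \<tau> (q j) * c' j)"
proof -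
  have "(\<Sum>n\<in>pI I J. \<tau> (pm p q n) * pm c c' n) = (\<Sum>n\<in>pI I J. pm (\<lambda>i. \<tau> (p i)) (\<lambda>j. \<tau> (q j)) n * pm c c' n)"
    using tpm assms by (auto intro!: sum.cong)
  also have "\<dots> = (\<Sum>i\<in>I. \<tau> (p i) * c i) * (\<Sum>j\<in>J. \<tau> (q j) * c' j)" by (rule pm_sum[OF assms(1,2)])
  finally show ?thesis .
qed

lemma pmL: "\<forall>i\<in>I. p i \<in> L \<Longrightarrow> \<forall>j\<in>J. q j \<in> L \<Longrightarrow> n \<in> pI I J \<Longrightarrow> pm p q n \<in> L"
  using pI_mem dsubD(4)[OF L] unfolding pm_def by blast

lemma ext_mul:
  assumes "x \<in> M" "y \<in> M" shows "g (x*y) = g x * g y"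
proof -
  obtain I a b c where r1: "isrep L C x I a b c" using getrep assms by blast
  obtain J a' b' c' where r2: "isrep L C y J a' b' c'" using getrep assms by blast
  have f: "finite I" "finite J" using r1 r2 unfolding isrep_def by auto
  note c1 = cD[OF r1] and c2 = cD[OF r2]
  show ?thesis
    unfolding ext_eq[OF rep_mul[OF L cC r1 r2]] ext_eq[OF r1] ext_eq[OF r2]
    using tsum[OF f, of b b' c c'] tsum[OF f, of a a' c c'] c1 c2 by simp
qed

lemma ext_add:
  assumes "x \<in> M" "y \<in> M" shows "g (x+y) = g x + g y"
proof -
  obtain I a b c where r1: "isrep L C x I a b c" using getrep assms by blast
  obtain J a' b' c' where r2: "isrep L C y J a' b' c'" using getrep assms by blast
  have f: "finite I" "finite J" using r1 r2 unfolding isrep_def by auto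
  note c1 = cD[OF r1] and c2 = cD[OF r2]
  have "(\<Sum>n\<in>pI I J. \<tau> (pm b a' n + pm a b' n) * pm c c' n)
     = (\<Sum>n\<in>pI I J. \<tau> (pm b a' n) * pm c c' n) + (\<Sum>n\<in>pI I J. \<tau> (pm a b' n) * pm c c' n)"
    unfolding sum.distrib[symmetric]
  proof (rule sum.cong[OF refl])
    fix n assume n: "n \<in> pI I J"
    have m: "pm b a' n \<in> L" "pm a b' n \<in> L" using pmL[OF _ _ n] c1 c2 by auto
    show "\<tau> (pm b a' n + pm a b' n) * pm c c' n = \<tau> (pm b a' n) * pm c c' n + \<tau> (pm a b' n) * pm c c' n"
      by (simp add: tb(5)[OF m] distrib_right)
  qed
  also have "\<dots> = (\<Sum>i\<in>I. \<tau> (b i) * c i) * (\<Sum>j\<in>J. \<tau> (a' j) * c' j) + (\<Sum>i\<in>I. \<tau> (a i) * c i) * (\<Sum>j\<in>J. \<tau> (b' j) * c' j)"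
    using tsum[OF f, of b a' c c'] tsum[OF f, of a b' c c'] c1 c2 by simp
  finally have e: "(\<Sum>n\<in>pI I J. \<tau> (pm b a' n + pm a b' n) * pm c c' n) = \<dots>" .
  show ?thesis
    unfolding ext_eq[OF rep_add[OF L cC r1 r2]] ext_eq[OF r1] ext_eq[OF r2] e
    using tsum[OF f, of a a' c c'] c1 c2 tA_nz[OF r1] tA_nz[OF r2] by (simp add: field_simps)
qed

lemma ext_D:
  assumes "x \<in> M" shows "g (D x) = D (g x)"
proof -
  obtain I a b c where r1: "isrep L C x I a b c" using getrep assms by blast
  have f: "finite I" using r1 unfolding isrep_def by auto
  note c1 = cD[OF r1]
  have dL: "\<forall>i\<in>I. D (a i) \<in> L \<and> D (b i) \<in> L" using c1 dsubD(7)[OF L] by auto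
  define tA where "tA = (\<Sum>i\<in>I. \<tau> (a i) * c i)"
  define tB where "tB = (\<Sum>i\<in>I. \<tau> (b i) * c i)"
  have DtA: "D tA = (\<Sum>i\<in>I. \<tau> (D (a i)) * c i)"
  proof -
    have cc: "\<forall>i\<in>I. D (c i) = 0" using c1 by auto
    have "D tA = (\<Sum>i\<in>I. D (\<tau> (a i)) * c i)" unfolding tA_def by (rule Dlin[OF L cC cc])
    also have "\<dots> = (\<Sum>i\<in>I. \<tau> (D (a i)) * c i)" by (rule sum.cong) (use c1 tD in auto)
    finally show ?thesis .
  qed
  have DtB: "D tB = (\<Sum>i\<in>I. \<tau> (D (b i)) * c i)"
  proof -
    have cc: "\<forall>i\<in>I. D (c i) = 0" using c1 by auto
    have "D tB = (\<Sum>i\<in>I. D (\<tau> (b i)) * c i)" unfolding tB_def by (rule Dlin[OF L cC cc])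
    also have "\<dots> = (\<Sum>i\<in>I. \<tau> (D (b i)) * c i)" by (rule sum.cong) (use c1 tD in auto)
    finally show ?thesis .
  qed
  have "(\<Sum>n\<in>pI I I. \<tau> (pm a (\<lambda>i. D (b i)) n - pm b (\<lambda>i. D (a i)) n) * pm c c n)
     = (\<Sum>n\<in>pI I I. \<tau> (pm a (\<lambda>i. D (b i)) n) * pm c c n) - (\<Sum>n\<in>pI I I. \<tau> (pm b (\<lambda>i. D (a i)) n) * pm c c n)"
    unfolding sum_subtractf[symmetric]
  proof (rule sum.cong[OF refl])
    fix n assume n: "n \<in> pI I I"
    have m: "pm a (\<lambda>i. D (b i)) n \<in> L" "pm b (\<lambda>i. D (a i)) n \<in> L" using pmL[OF _ _ n] c1 dL by auto
    show "\<tau> (pm a (\<lambda>i. D (b i)) n - pm b (\<lambda>i. D (a i)) n) * pm c c n =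
      \<tau> (pm a (\<lambda>i. D (b i)) n) * pm c c n - \<tau> (pm b (\<lambda>i. D (a i)) n) * pm c c n"
      by (simp add: tb(4)[OF m] left_diff_distrib)
  qed
  also have "\<dots> = tA * D tB - tB * D tA"
    unfolding DtA DtB unfolding tA_def tB_def
    using tsum[OF f f, of a "\<lambda>i. D (b i)" c c] tsum[OF f f, of b "\<lambda>i. D (a i)" c c] c1 dL by simp
  finally have e: "(\<Sum>n\<in>pI I I. \<tau> (pm a (\<lambda>i. D (b i)) n - pm b (\<lambda>i. D (a i)) n) * pm c c n) = tA * D tB - tB * D tA" .
  have nz: "tA \<noteq> 0" using tA_nz[OF r1] tA_def by simp
  show ?thesis
    unfolding ext_eq[OF rep_D[OF L cC r1]] ext_eq[OF r1] e tA_def[symmetric] tB_def[symmetric]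
    using tsum[OF f f, of a a c c] c1 nz Ddiv[OF nz, of tB] by (simp add: tA_def)
qed

lemma ext_neg: "x \<in> M \<Longrightarrow> g (-x) = - g x"
proof -
  assume "x \<in> M"
  then obtain I a b c where r1: "isrep L C x I a b c" using getrep by blast
  show ?thesis unfolding ext_eq[OF rep_neg[OF L cC r1]] ext_eq[OF r1]
    using cD[OF r1] tb by (simp add: sum_negf)
qed

lemma ext_0: "x \<in> M \<Longrightarrow> g x = 0 \<Longrightarrow> x = 0"
proof -
  assume "x \<in> M" "g x = 0"
  then obtain I a b c where r1: "isrep L C x I a b c" using getrep by blast
  have "(\<Sum>i\<in>I. \<tau> (b i) * c i) = 0" using \<open>g x = 0\<close> ext_eq[OF r1] tA_nz[OF r1] by simp
  then have "(\<Sum>i\<in>I. b i * c i) = 0" using Wti cD[OF r1] r1 unfolding isrep_def by blast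
  then show "x = 0" using r1 unfolding isrep_def by (metis mult_eq_0_iff)
qed

lemma ext_inj: "inj_on g M"
proof (rule inj_onI)
  fix x y assume xy: "x \<in> M" "y \<in> M" "g x = g y"
  have "g (x + -y) = 0" using ext_add[OF xy(1) dsubD(5)[OF Mdsub xy(2)]] ext_neg[OF xy(2)] xy(3) by simp
  then have "x + - y = 0" using ext_0 dsubD(3,5)[OF Mdsub] xy by blast
  then show "x = y" by (simp add: eq_neg_iff_add_eq_0[symmetric])
qed

lemma ext_in: "x \<in> M \<Longrightarrow> g x \<in> M"
proof -
  assume "x \<in> M"
  then obtain I a b c where r1: "isrep L C x I a b c" using getrep by blast
  have inM: "\<forall>i\<in>I. \<tau> (a i) * c i \<in> M \<and> \<tau> (b i) * c i \<in> M"
  proof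
    fix i assume i: "i\<in>I"
    have "\<tau> (a i) \<in> M" "\<tau> (b i) \<in> M" "c i \<in> M"
      using tM dgen_incl[of "\<tau>`L \<union> C" D] r1 i CM unfolding isrep_def by auto
    then show "\<tau> (a i) * c i \<in> M \<and> \<tau> (b i) * c i \<in> M" using dsubD(4)[OF Mdsub] by auto
  qed
  show ?thesis unfolding ext_eq[OF r1]
  proof (rule dsubD(9)[OF Mdsub])
    show "(\<Sum>i\<in>I. \<tau> (b i) * c i) \<in> M" by (rule dsub_sum[OF Mdsub]) (use inM in blast)
    show "(\<Sum>i\<in>I. \<tau> (a i) * c i) \<in> M" by (rule dsub_sum[OF Mdsub]) (use inM in blast)
  qed
qed

lemma ext_surj: "z \<in> M \<Longrightarrow> \<exists>x\<in>M. g x = z"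
proof -
  assume "z \<in> M"
  then obtain I a b c where r: "isrep (\<tau>`L) C z I a b c" using repT tM by auto
  define a0 where "a0 i = inv_into L \<tau> (a i)" for i
  define b0 where "b0 i = inv_into L \<tau> (b i)" for i
  have ab: "\<forall>i\<in>I. a0 i \<in> L \<and> b0 i \<in> L \<and> \<tau> (a0 i) = a i \<and> \<tau> (b0 i) = b i"
    using r unfolding isrep_def a0_def b0_def by (auto simp: inv_into_into f_inv_into_f)
  have f: "finite I" and cc: "\<forall>i\<in>I. D (c i) = 0" using r unfolding isrep_def consts_of_def by auto
  have A: "(\<Sum>i\<in>I. a i * c i) \<noteq> 0" using r unfolding isrep_def by auto
  have A0: "(\<Sum>i\<in>I. a0 i * c i) \<noteq> 0"
  proof
    assume "(\<Sum>i\<in>I. a0 i * c i) = 0"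
    then have "(\<Sum>i\<in>I. \<tau> (a0 i) * c i) = 0" using Wt[OF f] ab cc by blast
    then show False using A ab by simp
  qed
  define x where "x = (\<Sum>i\<in>I. b0 i * c i) / (\<Sum>i\<in>I. a0 i * c i)"
  have rx: "isrep L C x I a0 b0 c" using r ab A0 f unfolding isrep_def x_def by auto
  have "g x = z" unfolding ext_eq[OF rx] using ab r A unfolding isrep_def by (simp add: field_simps)
  moreover have "x \<in> M" using rx repL by blast
  ultimately show ?thesis by blast
qed

lemma ext_hom: "hom D M g"
  unfolding hom_def using ext_add ext_mul ext_L tb dsubD(2)[OF L] by auto

lemma ext_fix: "x \<in> dgen D (K \<union> C) \<Longrightarrow> g x = x"
proof -
  assume x: "x \<in> dgen D (K \<union> C)"
  have "hom D M id" unfolding hom_def by auto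
  moreover have "\<forall>y\<in>K \<union> C. g y = id y" using ext_L ext_C tK KL by auto
  ultimately show ?thesis
    using agree[OF Mdsub ext_hom, of id "K \<union> C" x] ext_D x KL LM CM by auto
qed

lemma ext_Gal: "g \<in> Gal D K L"
proof -
  have "g ` M = M" using ext_in ext_surj by blast
  moreover have "g \<in> extensional M" unfolding extf_def by (rule restrict_extensional)
  moreover have "dgen D (K \<union> C) \<subseteq> M" using KL by (intro dgen_mono) auto
  ultimately show ?thesis
    unfolding Gal_def daut_def dHom_def
    using ext_inj ext_add ext_mul ext_D ext_fix ext_L tb dsubD(2)[OF L] LM by auto
qed

end



lemma dHom_mono: "X \<subseteq> Y \<Longrightarrow> dHom D K L X \<subseteq> dHom D K L Y"
  unfolding dHom_def by auto

lemma Gal_facts: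
  assumes "h \<in> Gal D K L"
  shows "hom D (dgen D (L \<union> consts_of D UNIV)) h"
    "\<forall>x\<in>dgen D (L \<union> consts_of D UNIV). h (D x) = D (h x)"
    "h ` dgen D (L \<union> consts_of D UNIV) = dgen D (L \<union> consts_of D UNIV)"
    "inj_on h (dgen D (L \<union> consts_of D UNIV))"
    "h \<in> extensional (dgen D (L \<union> consts_of D UNIV))"
    "\<forall>x\<in>dgen D (K \<union> consts_of D UNIV). h x = x"
  using assms unfolding Gal_def daut_def dHom_def hom_def by auto

lemma uniqM:
  assumes M: "M = dgen D (L \<union> C)"
    and e1: "f1 \<in> extensional M" and e2: "f2 \<in> extensional M"
    and h1: "hom D M f1" and h2: "hom D M f2"
    and d1: "\<forall>x\<in>M. f1 (D x) = D (f1 x)" and d2: "\<forall>x\<in>M. f2 (D x) = D (f2 x)"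
    and eq: "\<forall>x\<in>L \<union> C. f1 x = f2 x"
  shows "f1 = f2"
proof (rule extensionalityI[OF e1 e2])
  fix x assume "x \<in> M"
  then show "f1 x = f2 x"
    using agree[OF _ h1 h2 d1 d2 _ eq, of x] dgen_dsub[of D "L \<union> C"] dgen_incl[of "L \<union> C" D] M by auto
qed

lemma comp_dHom:
  assumes "\<sigma> \<in> daut D K L" "\<tau> \<in> daut D K L" and KL: "K \<subseteq> L" and L: "dsubfield D L"
  shows "compose L \<sigma> \<tau> \<in> dHom D K L UNIV"
proof -
  have s: "\<sigma> \<in> dHom D K L L" and t: "\<tau> \<in> dHom D K L L" using assms unfolding daut_def by auto
  have tL: "\<And>x. x\<in>L \<Longrightarrow> \<tau> x \<in> L" using t unfolding dHom_def by auto
  have si: "inj_on \<sigma> L" and ti: "inj_on \<tau> L" using s t unfolding dHom_def by auto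
  have s1: "\<sigma> 1 = 1" and t1: "\<tau> 1 = 1" using s t unfolding dHom_def by auto
  have sa: "\<And>x y. x\<in>L \<Longrightarrow> y\<in>L \<Longrightarrow> \<sigma> (x+y) = \<sigma> x + \<sigma> y \<and> \<sigma> (x*y) = \<sigma> x * \<sigma> y"
    and ta: "\<And>x y. x\<in>L \<Longrightarrow> y\<in>L \<Longrightarrow> \<tau> (x+y) = \<tau> x + \<tau> y \<and> \<tau> (x*y) = \<tau> x * \<tau> y"
    using s t unfolding dHom_def by auto
  have sd: "\<And>x. x\<in>L \<Longrightarrow> \<sigma> (D x) = D (\<sigma> x)" and td: "\<And>x. x\<in>L \<Longrightarrow> \<tau> (D x) = D (\<tau> x)"
    using s t unfolding dHom_def by auto
  have sk: "\<And>x. x\<in>K \<Longrightarrow> \<sigma> x = x" and tk: "\<And>x. x\<in>K \<Longrightarrow> \<tau> x = x"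
    using s t unfolding dHom_def by auto
  have inj: "inj_on (compose L \<sigma> \<tau>) L"
  proof (rule inj_onI)
    fix x y assume xy: "x \<in> L" "y \<in> L" "compose L \<sigma> \<tau> x = compose L \<sigma> \<tau> y"
    then have "\<sigma> (\<tau> x) = \<sigma> (\<tau> y)" unfolding compose_def by simp
    then have "\<tau> x = \<tau> y" using si tL xy(1,2) by (meson inj_onD)
    then show "x = y" using ti xy(1,2) by (meson inj_onD)
  qed
  have L1: "1 \<in> L" by (rule dsubD(2)[OF L])
  show ?thesis
    unfolding dHom_def
  proof (intro CollectI conjI ballI)
    show "compose L \<sigma> \<tau> \<in> extensional L" by (rule compose_extensional)
    show "inj_on (compose L \<sigma> \<tau>) L" by (rule inj)
    show "compose L \<sigma> \<tau> ` L \<subseteq> UNIV" by simp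
  next
    fix x y assume xy: "x \<in> L" "y \<in> L"
    have "x + y \<in> L" "x * y \<in> L" using dsubD(3,4)[OF L xy] by auto
    then show "compose L \<sigma> \<tau> (x + y) = compose L \<sigma> \<tau> x + compose L \<sigma> \<tau> y"
      "compose L \<sigma> \<tau> (x * y) = compose L \<sigma> \<tau> x * compose L \<sigma> \<tau> y"
      unfolding compose_def using xy sa ta tL by auto
  next
    fix x assume x: "x \<in> L"
    have "D x \<in> L" by (rule dsubD(7)[OF L x])
    then show "compose L \<sigma> \<tau> (D x) = D (compose L \<sigma> \<tau> x)"
      unfolding compose_def using x sd td tL by auto
  next
    fix x assume x: "x \<in> K"
    then show "compose L \<sigma> \<tau> x = x" unfolding compose_def using KL sk tk by auto
  next
    show "compose L \<sigma> \<tau> 1 = 1" unfolding compose_def using L1 s1 t1 by simp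
  qed
qed

context der
begin

lemma Qlem:
  assumes F: "dsubfield D F" and U: "dsubfield D U" and FU: "F \<subseteq> U"
    and x: "x \<in> dgen D (F \<union> consts_of D UNIV)" "x \<in> U"
  shows "x \<in> dgen D (F \<union> consts_of D U)"
proof -
  obtain I a b c where r: "isrep F (consts_of D UNIV) x I a b c"
    using repset_eq[OF F cset_consts[OF dsub_UNIV]] x by blast
  let ?F' = "dgen D (F \<union> consts_of D U)"
  have F'U: "?F' \<subseteq> U" using FU U by (intro dgen_sub) (auto simp: consts_of_def)
  have inc: "F \<subseteq> ?F'" "consts_of D U \<subseteq> ?F'" using dgen_incl[of "F \<union> consts_of D U" D] by auto
  show ?thesis
    apply (rule Qp[OF U dgen_dsub F'U inc(2) x(2), of I a b c])
    using r inc unfolding isrep_def consts_of_def by auto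
qed

end

theorem lemma3p11:
  fixes D :: "'a::field_char_0 \<Rightarrow> 'a" and K L U :: "'a set"
  assumes "derivation D" and "diff_closed D" and "saturated D"
    and "dsubfield D K" and "dsubfield D L" and "dsubfield D U"
    and "K \<subseteq> L" and "L \<subseteq> U"
    and "(card_of U, card_of (UNIV :: 'a set)) \<in> ordLess"
    and "strongly_normal D K L"
  shows "(\<exists>\<Phi>. group_embedding L (gal_small D K L)
                 (dgen D (L \<union> consts_of D UNIV)) (Gal D K L) \<Phi>) \<and>
         (\<forall>\<sigma>\<in>dHom D K L U.
            (\<exists>!g. g \<in> Gal D K L \<and> (\<forall>x\<in>L. g x = \<sigma> x)) \<and>
            (\<forall>g. g \<in> Gal D K L \<and> (\<forall>x\<in>L. g x = \<sigma> x) \<longrightarrow>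
               restrict g (dgen D (L \<union> consts_of D U)) \<in> Gal_in D U K L))"
proof -
  interpret der D by unfold_locales (rule assms(1))
  note K = assms(4) and L = assms(5) and U = assms(6) and KL = assms(7) and LU = assms(8)
  define C where "C = consts_of D UNIV"
  define M where "M = dgen D (L \<union> C)"
  have Mdsub: "dsubfield D M" unfolding M_def by (rule dgen_dsub)
  have LM: "L \<subseteq> M" and CM: "C \<subseteq> M" unfolding M_def using dgen_incl[of "L \<union> C" D] by auto
  have CK: "C \<subseteq> dgen D (K \<union> C)" using dgen_incl[of "K \<union> C" D] by auto
  have strong_all: "\<And>\<tau>. \<tau> \<in> dHom D K L UNIV \<Longrightarrow> strong D L \<tau>"
    using assms(10) unfolding strongly_normal_def by auto
  have ext: "extf D L \<tau> \<in> Gal D K L \<and> (\<forall>x\<in>L. extf D L \<tau> x = \<tau> x)" if t: "\<tau> \<in> dHom D K L UNIV" for \<tau>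
  proof -
    interpret extc D K L \<tau> by unfold_locales (use K L KL t strong_all in auto)
    show ?thesis using ext_Gal ext_L by auto
  qed
  note GF = Gal_facts[where D=D and K=K and L=L, folded C_def, folded M_def]
  have uniq: "h1 = h2" if "h1 \<in> Gal D K L" "h2 \<in> Gal D K L" "\<forall>x\<in>L. h1 x = h2 x" for h1 h2
    apply (rule uniqM[OF M_def])
    using GF[OF that(1)] GF[OF that(2)] that(3) CK by auto
  have P1: "group_embedding L (gal_small D K L) M (Gal D K L) (extf D L)"
    unfolding group_embedding_def
  proof (intro conjI ballI)
    have sub: "\<And>\<sigma>. \<sigma> \<in> gal_small D K L \<Longrightarrow> \<sigma> \<in> dHom D K L UNIV"
      unfolding gal_small_def daut_def using dHom_mono[of L UNIV D K] by auto
    show "extf D L ` gal_small D K L \<subseteq> Gal D K L" using ext sub by auto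
    show "inj_on (extf D L) (gal_small D K L)"
    proof (rule inj_onI)
      fix \<sigma> \<tau> assume a: "\<sigma> \<in> gal_small D K L" "\<tau> \<in> gal_small D K L" "extf D L \<sigma> = extf D L \<tau>"
      have "\<sigma> \<in> extensional L" "\<tau> \<in> extensional L"
        using a unfolding gal_small_def daut_def dHom_def by auto
      moreover have "\<forall>x\<in>L. \<sigma> x = \<tau> x" using ext[OF sub[OF a(1)]] ext[OF sub[OF a(2)]] a(3) by metis
      ultimately show "\<sigma> = \<tau>" by (meson extensionalityI)
    qed
  next
    fix \<sigma> \<tau> assume a: "\<sigma> \<in> gal_small D K L" "\<tau> \<in> gal_small D K L"
    have s: "\<sigma> \<in> dHom D K L UNIV" and t: "\<tau> \<in> dHom D K L UNIV"
      using a unfolding gal_small_def daut_def using dHom_mono[of L UNIV D K] by auto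
    have tL: "\<forall>x\<in>L. \<tau> x \<in> L" using a unfolding gal_small_def daut_def dHom_def by auto
    have cst: "compose L \<sigma> \<tau> \<in> dHom D K L UNIV" using comp_dHom[OF _ _ KL L] a unfolding gal_small_def by blast
    note E = ext[OF cst] and Es = ext[OF s] and Et = ext[OF t]
    note gs = GF[OF conjunct1[OF Es]] and gt = GF[OF conjunct1[OF Et]] and gc = GF[OF conjunct1[OF E]]
    have tM: "\<forall>x\<in>M. extf D L \<tau> x \<in> M" using gt(3) by auto
    have hc: "hom D M (compose M (extf D L \<sigma>) (extf D L \<tau>))"
      using gs(1) gt(1) tM Mdsub unfolding hom_def compose_def by (auto intro: dsubD)
    have dc: "\<forall>x\<in>M. compose M (extf D L \<sigma>) (extf D L \<tau>) (D x) = D (compose M (extf D L \<sigma>) (extf D L \<tau>) x)"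
      using gs(2) gt(2) tM dsubD(7)[OF Mdsub] unfolding compose_def by auto
    have eqL: "\<forall>x\<in>L \<union> C. extf D L (compose L \<sigma> \<tau>) x = compose M (extf D L \<sigma>) (extf D L \<tau>) x"
      using E Es Et tL LM CM CK gs(6) gt(6) gc(6) unfolding compose_def by auto
    show "extf D L (compose L \<sigma> \<tau>) = compose M (extf D L \<sigma>) (extf D L \<tau>)"
      by (rule uniqM[OF M_def gc(5) compose_extensional gc(1) hc gc(2) dc eqL])
  qed
  have P23: "(\<exists>!g. g \<in> Gal D K L \<and> (\<forall>x\<in>L. g x = \<sigma> x)) \<and>
            (\<forall>g. g \<in> Gal D K L \<and> (\<forall>x\<in>L. g x = \<sigma> x) \<longrightarrow>
               restrict g (dgen D (L \<union> consts_of D U)) \<in> Gal_in D U K L)" if sU: "\<sigma> \<in> dHom D K L U" for \<sigma>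
  proof
    have s: "\<sigma> \<in> dHom D K L UNIV" using sU dHom_mono[of U UNIV D K L] by auto
    show "\<exists>!g. g \<in> Gal D K L \<and> (\<forall>x\<in>L. g x = \<sigma> x)"
      using ext[OF s] uniq by (metis (no_types, lifting))
    show "\<forall>g. g \<in> Gal D K L \<and> (\<forall>x\<in>L. g x = \<sigma> x) \<longrightarrow>
               restrict g (dgen D (L \<union> consts_of D U)) \<in> Gal_in D U K L"
    proof (intro allI impI)
      fix g assume ga: "g \<in> Gal D K L \<and> (\<forall>x\<in>L. g x = \<sigma> x)"
      note G = GF[OF conjunct1[OF ga]]
      have gs: "\<forall>x\<in>L. g x = \<sigma> x" using ga by blast
      define CU where "CU = consts_of D U"
      define N where "N = dgen D (L \<union> CU)"
      define K2 where "K2 = dgen D (K \<union> CU)"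
      have CUC: "CU \<subseteq> C" unfolding CU_def C_def consts_of_def by auto
      have NM: "N \<subseteq> M" unfolding N_def M_def using CUC by (intro dgen_mono) auto
      have K2K: "K2 \<subseteq> dgen D (K \<union> C)" unfolding K2_def using CUC by (intro dgen_mono) auto
      have K2N: "K2 \<subseteq> N" unfolding K2_def N_def using KL by (intro dgen_mono) auto
      have Ndsub: "dsubfield D N" unfolding N_def by (rule dgen_dsub)
      have LN: "L \<subseteq> N" and CUN: "CU \<subseteq> N" unfolding N_def using dgen_incl[of "L \<union> CU" D] by auto
      have sh: "hom D L \<sigma>" by (rule dHom_hom[OF s])
      have sD: "\<forall>x\<in>L. \<sigma> (D x) = D (\<sigma> x)" using s unfolding dHom_def by auto
      have sL: "dsubfield D (\<sigma> ` L)" by (rule img_dsub[OF L sh sD])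
      have sLU: "\<sigma> ` L \<subseteq> U" using sU unfolding dHom_def by auto
      have stM: "M = dgen D (\<sigma> ` L \<union> C)" using strong_all[OF s] unfolding strong_def M_def C_def by auto
      have pre: "dsubfield D {x\<in>M. g x \<in> N}" by (rule pre_dsub[OF Mdsub Ndsub G(1) G(2)])
      have "L \<union> CU \<subseteq> {x\<in>M. g x \<in> N}"
      proof
        fix x assume x: "x \<in> L \<union> CU"
        show "x \<in> {x\<in>M. g x \<in> N}"
        proof (cases "x \<in> L")
          case True
          have "\<sigma> x \<in> M" using stM dgen_incl[of "\<sigma> ` L \<union> C" D] True by auto
          moreover have "\<sigma> x \<in> U" using sLU True by auto
          ultimately have "\<sigma> x \<in> N"
            using Qlem[OF L U LU] unfolding N_def CU_def M_def C_def by auto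
          then show ?thesis using True LM gs by auto
        next
          case False
          then have "x \<in> CU" using x by auto
          then have gx: "g x = x" using CUC CK G(6) by blast
          show ?thesis using gx \<open>x \<in> CU\<close> CUC CUN CM by auto
        qed
      qed
      then have gN: "\<forall>x\<in>N. g x \<in> N" using dgen_sub[OF pre] unfolding N_def by blast
      have hN: "hom D N g" using G(1) NM unfolding hom_def by auto
      have Im: "dsubfield D (g ` N)" by (rule img_dsub[OF Ndsub hN]) (use G(2) NM in auto)
      have sLIm: "\<sigma> ` L \<subseteq> g ` N" using gs LN by (auto intro!: image_eqI)
      have CUIm: "CU \<subseteq> g ` N" using CUN CUC CK G(6) by (auto intro!: image_eqI)
      have "dgen D (\<sigma> ` L \<union> CU) \<subseteq> g ` N" using sLIm CUIm by (intro dgen_sub[OF Im]) auto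
      moreover have "L \<subseteq> dgen D (\<sigma> ` L \<union> CU)"
      proof
        fix x assume "x \<in> L"
        then have "x \<in> dgen D (\<sigma> ` L \<union> consts_of D UNIV)" "x \<in> U" using LM stM LU unfolding C_def by auto
        then show "x \<in> dgen D (\<sigma> ` L \<union> CU)" using Qlem[OF sL U sLU] unfolding CU_def by blast
      qed
      ultimately have "L \<union> CU \<subseteq> g ` N" using CUIm by blast
      then have "N \<subseteq> g ` N" using dgen_sub[OF Im] unfolding N_def by blast
      then have imN: "g ` N = N" using gN by auto
      have gadd: "\<And>x y. x\<in>M \<Longrightarrow> y\<in>M \<Longrightarrow> g (x+y) = g x + g y \<and> g (x*y) = g x * g y"
        and g1: "g 1 = 1" using G(1) unfolding hom_def by auto
      have "restrict g N \<in> dHom D K2 N N"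
        unfolding dHom_def
      proof (intro CollectI conjI ballI)
        show "restrict g N \<in> extensional N" by (rule restrict_extensional)
        show "inj_on (restrict g N) N" using inj_on_subset[OF G(4) NM] by simp
        show "restrict g N ` N \<subseteq> N" using imN by simp
        show "restrict g N 1 = 1" using g1 dsubD(2)[OF Ndsub] by simp
      next
        fix x y assume xy: "x \<in> N" "y \<in> N"
        have m: "x + y \<in> N" "x * y \<in> N" using dsubD(3,4)[OF Ndsub xy] by auto
        show "restrict g N (x + y) = restrict g N x + restrict g N y"
          "restrict g N (x * y) = restrict g N x * restrict g N y"
          using m xy gadd[of x y] NM by auto
      next
        fix x assume x: "x \<in> N"
        have "D x \<in> N" by (rule dsubD(7)[OF Ndsub x])
        then show "restrict g N (D x) = D (restrict g N x)" using x G(2) NM by auto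
      next
        fix x assume x: "x \<in> K2"
        then show "restrict g N x = x" using K2N K2K G(6) by auto
      qed
      then show "restrict g (dgen D (L \<union> consts_of D U)) \<in> Gal_in D U K L"
        unfolding Gal_in_def daut_def using imN unfolding N_def K2_def CU_def by auto
    qed
  qed
  show ?thesis using P1 P23 unfolding M_def C_def by blast
qed


end
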